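(* Suppose that for each $r,k\in\mathbb{N}$ with $k\le r$, $\{Y^{(k)}_{r,i}:i\in\{1,\dots,k\}\}$ is a collection of independent random variables. Suppose there exist $\alpha\in(0,1]$, $c>0$, $r_0$ and $\theta_0$ such that for all $r,k\in\mathbb{N}$, $i\in\{1,\dots,k\}$ and $\theta\in\mathbb{R}$ with $r/k>r_0$ and $\theta>\theta_0$, $$\mathbb{P}\left(Y^{(k)}_{r,i}>\theta (r/k)^{1/3}\right)\le\exp(-c\theta^\alpha).$$ Finally, let $Y_r$ be a random variable such that $Y_r\le\sum_{i=1}^kY^{(k)}_{r,i}$ for every $k\in\mathbb{N}$ with $r/k>r_0$. Then there exist $\tilde\theta_0=\tilde\theta_0(c,\alpha,\theta_0,r_0)$ and $c'=c'(c,\alpha,\theta_0,r_0)>0$ such that for all $\tilde\theta_0<\theta<r^{2/3}$ and $r>r_0$, $$\mathbb{P}\left(Y_r>\theta r^{1/3}\right)\le\exp\left(-c'\theta^{3\alpha/2}\right).$$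
   Context: Convention: quantities such as $k$ and $r/k$ that are required to be integers are rounded down when expressed as real numbers. *)

theory Defs
  imports "HOL-Probability.Probability"
begin

end

theory Submission
  imports Defs "HOL-Real_Asymp.Real_Asymp"
begin

lemma K_exists:
  fixes a b T :: real assumes "a > 0" "b > 0" "T > 0"
  shows "\<exists>K\<ge>0. \<forall>N. (\<Sum>n<N. T * 2^n * exp (- a * (T * 2^n) powr b)) \<le> K"
proof -
  define f where "f n = T * 2^n * exp (- a * (T * 2^n) powr b)" for n :: nat
  have lim: "((\<lambda>n::nat. 4^n * (T * exp (- a * (T * 2^n) powr b))) \<longlongrightarrow> 0) at_top"
    using assms by real_asymp
  hence ev: "eventually (\<lambda>n. 4^n * (T * exp (- a * (T * 2^n) powr b)) < 1) sequentially"
    by (rule order_tendstoD) simp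
  have "eventually (\<lambda>n. norm (f n) \<le> (1/2)^n) sequentially"
  proof (rule eventually_mono[OF ev])
    fix n :: nat
    assume h: "4^n * (T * exp (- a * (T * 2^n) powr b)) < 1"
    have "(4::real)^n = 2^n * 2^n" by (simp add: power_mult_distrib[symmetric])
    hence "2^n * (2^n * (T * exp (- a * (T * 2^n) powr b))) \<le> 1" using h by (simp add: mult.assoc)
    hence "2^n * f n \<le> 1" by (simp add: f_def mult_ac)
    moreover have "f n \<ge> 0" using assms by (simp add: f_def)
    ultimately show "norm (f n) \<le> (1/2)^n"
      by (simp add: power_one_over field_simps)
  qed
  hence sf: "summable f"
    by (rule summable_comparison_test_ev) simp
  have nn: "\<And>n. f n \<ge> 0" using assms by (simp add: f_def)
  have A: "\<forall>N. sum f {..<N} \<le> suminf f"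
    using nn by (auto intro!: sum_le_suminf[OF sf])
  have B: "suminf f \<ge> 0" using sf nn by (intro suminf_nonneg) auto
  show ?thesis apply (rule exI[of _ "suminf f"]) using A B unfolding f_def by blast
qed

lemma step_bound:
  fixes l T w :: real assumes "l \<ge> 0" "T \<ge> 0"
  shows "exp (l * min w (T*2^N)) \<le> exp (l*T) +
     (\<Sum>n<N. (exp (l*(T*2^(Suc n))) - exp (l*(T*2^n))) * (if T*2^n < w then 1 else 0))"
proof (induction N)
  case 0
  then show ?case using assms by (simp add: mult_left_mono)
next
  case (Suc N)
  have mono: "exp (l*(T*2^N)) \<le> exp (l*(T*2^(Suc N)))"
    using assms by (auto intro!: mult_left_mono)
  show ?case
  proof (cases "T*2^N < w")
    case True
    have "exp (l * min w (T*2^Suc N)) \<le> exp (l*(T*2^(Suc N)))"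
      using assms by (auto intro!: mult_left_mono)
    moreover have "min w (T*2^N) = T*2^N" using True by simp
    moreover have "(\<Sum>n<Suc N. (exp (l*(T*2^(Suc n))) - exp (l*(T*2^n))) * (if T*2^n < w then 1 else 0))
      = (\<Sum>n<N. (exp (l*(T*2^(Suc n))) - exp (l*(T*2^n))) * (if T*2^n < w then 1 else 0))
        + (exp (l*(T*2^(Suc N))) - exp (l*(T*2^N)))" using True by simp
    ultimately show ?thesis using Suc.IH by (simp only:)
  next
    case False
    have "T*2^N \<le> T*2^Suc N" using assms by simp
    hence "min w (T*2^Suc N) = min w (T*2^N)" using False by linarith
    then show ?thesis using Suc False by simp
  qed
qed

lemma finish_ev:
  fixes c \<alpha> :: real assumes "c > 0" "\<alpha> > 0"
  shows "\<exists>x0. \<forall>x\<ge>x0. x * exp (-(c/2) * x powr \<alpha>) \<le> 1 \<and> 2 * exp (-(c/16) * x powr \<alpha>) \<le> 1"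
proof -
  have l1: "((\<lambda>x. x * exp (-(c/2) * x powr \<alpha>)) \<longlongrightarrow> 0) at_top" using assms by real_asymp
  have l2: "((\<lambda>x. 2 * exp (-(c/16) * x powr \<alpha>)) \<longlongrightarrow> 0) at_top" using assms by real_asymp
  have "eventually (\<lambda>x. x * exp (-(c/2) * x powr \<alpha>) < 1) at_top"
    by (rule order_tendstoD[OF l1]) simp
  moreover have "eventually (\<lambda>x. 2 * exp (-(c/16) * x powr \<alpha>) < 1) at_top"
    by (rule order_tendstoD[OF l2]) simp
  ultimately have "eventually (\<lambda>x. x * exp (-(c/2) * x powr \<alpha>) \<le> 1 \<and> 2 * exp (-(c/16) * x powr \<alpha>) \<le> 1) at_top"
    by eventually_elim auto
  thus ?thesis by (simp add: eventually_at_top_linorder)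
qed

lemma finish:
  fixes c \<alpha> x :: real and k :: nat
  assumes "c > 0" "x > 0" "real k \<le> x" "x * exp (-(c/2) * x powr \<alpha>) \<le> 1" "2 * exp (-(c/16) * x powr \<alpha>) \<le> 1"
  shows "real k * exp (-c * x powr \<alpha>) + exp (-(c/8) * x powr \<alpha>) \<le> exp (-(c/16) * x powr \<alpha>)"
proof -
  have p: "x powr \<alpha> \<ge> 0" by simp
  have "real k * exp (-c * x powr \<alpha>) \<le> x * exp (-c * x powr \<alpha>)"
    using assms by (intro mult_right_mono) auto
  also have "\<dots> = (x * exp (-(c/2) * x powr \<alpha>)) * exp (-(c/2) * x powr \<alpha>)"
    by (simp add: mult.assoc exp_add[symmetric])
  also have "\<dots> \<le> exp (-(c/2) * x powr \<alpha>)"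
    using assms(4) assms(2) by (intro mult_left_le_one_le) auto
  also have "\<dots> \<le> exp (-(c/8) * x powr \<alpha>)" using assms p by (auto intro!: mult_right_mono)
  finally have "real k * exp (-c * x powr \<alpha>) + exp (-(c/8) * x powr \<alpha>) \<le> 2 * exp (-(c/8) * x powr \<alpha>)"
    by simp
  also have "\<dots> = (2 * exp (-(c/16) * x powr \<alpha>)) * exp (-(c/16) * x powr \<alpha>)"
    by (simp add: exp_add[symmetric])
  also have "\<dots> \<le> exp (-(c/16) * x powr \<alpha>)"
    using assms(5) by (intro mult_left_le_one_le) auto
  finally show ?thesis .
qed
lemma (in prob_space) core:
  fixes W :: "nat \<Rightarrow> 'a \<Rightarrow> real" and k :: nat
  assumes meas: "\<And>i. i \<in> {1..k} \<Longrightarrow> W i \<in> borel_measurable M"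
    and indep: "indep_vars (\<lambda>_. borel) W {1..k}"
    and tail: "\<And>i t. i \<in> {1..k} \<Longrightarrow> t > \<theta>0 \<Longrightarrow> prob {\<omega>\<in>space M. W i \<omega> > t} \<le> exp (-c * t powr \<alpha>)"
    and a0: "0 < \<alpha>" and a1: "\<alpha> \<le> 1" and c0: "0 < c" and T: "\<theta>0 < T" "0 < T" and K0: "0 \<le> K"
    and hK: "\<And>N. (\<Sum>n<N. T * 2^n * exp (- (c/2) * (T * 2^n) powr \<alpha>)) \<le> K"
    and xT: "T \<le> x" and xk: "2*(T+K)*real k \<le> x"
  shows "prob {\<omega>\<in>space M. (\<Sum>i\<in>{1..k}. W i \<omega>) > x} \<le> real k * exp (-c * x powr \<alpha>) + exp (-(c/8) * x powr \<alpha>)"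
proof -
  define l where "l = c/4 * x powr (\<alpha> - 1)"
  have x0: "x > 0" using xT T by simp
  have l0: "l \<ge> 0" using c0 by (simp add: l_def)
  have "x powr (\<alpha>-1) * x = x powr \<alpha>" using x0 by (simp add: powr_diff)
  hence lx: "l * x = c/4 * x powr \<alpha>" by (simp add: l_def)
  have exN: "\<exists>n. x \<le> T*2^n"
  proof -
    obtain n where "x/T < 2^n" using real_arch_pow[of 2 "x/T"] by auto
    hence "x \<le> T*2^n" using T by (simp add: field_simps)
    thus ?thesis by blast
  qed
  define N where "N = (LEAST n. x \<le> T*2^n)"
  have N: "x \<le> T*2^N" unfolding N_def by (rule LeastI_ex[OF exN])
  have Nlt: "T*2^n < x" if "n < N" for n
    using not_less_Least[OF that[unfolded N_def]] by simp
  define d where "d n = exp (l*(T*2^(Suc n))) - exp (l*(T*2^n))" for n :: nat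
  define g where "g w = exp (l*T) + (\<Sum>n<N. d n * (if T*2^n < w then 1 else 0))" for w :: real
  have pw: "exp (l * min w x) \<le> g w" for w
  proof -
    have "exp (l * min w x) \<le> exp (l * min w (T*2^N))"
      using N l0 by (auto intro!: mult_left_mono)
    also have "\<dots> \<le> g w" unfolding g_def d_def using step_bound[OF l0, of T w N] T by simp
    finally show ?thesis .
  qed
  have d0: "d n \<ge> 0" for n unfolding d_def using l0 T by (auto intro!: mult_left_mono)
  have int_bound: "(\<integral>\<omega>. exp (l * min (W i \<omega>) x) \<partial>M) \<le> exp (l*(T+K))" if i: "i \<in> {1..k}" for i
  proof -
    have mW[measurable]: "W i \<in> borel_measurable M" using meas i .
    have intI: "integrable M (\<lambda>\<omega>. if T*2^n < W i \<omega> then 1 else (0::real))" for n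
      by (rule integrable_const_bound[where B=1]) auto
    have intg: "integrable M (\<lambda>\<omega>. g (W i \<omega>))"
      unfolding g_def by (auto intro!: integrable_add integrable_sum integrable_mult_right intI)
    have "(\<integral>\<omega>. exp (l * min (W i \<omega>) x) \<partial>M) \<le> (\<integral>\<omega>. g (W i \<omega>) \<partial>M)"
    proof (rule integral_mono[OF _ intg])
      show "integrable M (\<lambda>\<omega>. exp (l * min (W i \<omega>) x))"
        by (rule integrable_const_bound[where B="exp (l*x)"]) (use l0 in \<open>auto intro!: mult_left_mono\<close>)
    qed (rule pw)
    also have "(\<integral>\<omega>. g (W i \<omega>) \<partial>M) = exp (l*T) + (\<Sum>n<N. d n * prob {\<omega>\<in>space M. T*2^n < W i \<omega>})"
    proof -
      have "(\<integral>\<omega>. g (W i \<omega>) \<partial>M) = exp (l*T) + (\<Sum>n<N. d n * (\<integral>\<omega>. (if T*2^n < W i \<omega> then 1 else 0) \<partial>M))"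
      proof -
        have I2: "integrable M (\<lambda>\<omega>. \<Sum>n<N. d n * (if T*2^n < W i \<omega> then 1 else 0))"
          by (auto intro!: integrable_sum integrable_mult_right intI)
        have I1: "(\<integral>\<omega>. (\<Sum>n<N. d n * (if T*2^n < W i \<omega> then 1 else 0)) \<partial>M)
            = (\<Sum>n<N. d n * (\<integral>\<omega>. (if T*2^n < W i \<omega> then 1 else 0) \<partial>M))"
          by (subst Bochner_Integration.integral_sum[where f="\<lambda>n \<omega>. d n * (if T*2^n < W i \<omega> then 1 else 0)" and I="{..<N}"])
             (auto intro!: integrable_mult_right intI)
        show ?thesis unfolding g_def
          by (subst Bochner_Integration.integral_add[OF _ I2]) (auto simp: I1 prob_space)
      qed
      also have "\<dots> = exp (l*T) + (\<Sum>n<N. d n * prob {\<omega>\<in>space M. T*2^n < W i \<omega>})"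
      proof -
        have "(\<integral>\<omega>. (if T*2^n < W i \<omega> then 1 else 0) \<partial>M) = prob {\<omega>\<in>space M. T*2^n < W i \<omega>}" for n
        proof -
          have "(\<integral>\<omega>. (if T*2^n < W i \<omega> then 1 else 0) \<partial>M) = (\<integral>\<omega>. indicator {\<omega>\<in>space M. T*2^n < W i \<omega>} \<omega> \<partial>M)"
            by (rule Bochner_Integration.integral_cong) (auto simp: indicator_def)
          also have "\<dots> = prob {\<omega>\<in>space M. T*2^n < W i \<omega>}" by simp
          finally show ?thesis .
        qed
        thus ?thesis by simp
      qed
      finally show ?thesis .
    qed
    also have "\<dots> \<le> exp (l*T) + (\<Sum>n<N. l * (T * 2^n * exp (- (c/2) * (T * 2^n) powr \<alpha>)))"
    proof -
      have "d n * prob {\<omega>\<in>space M. T*2^n < W i \<omega>} \<le> l * (T * 2^n * exp (- (c/2) * (T * 2^n) powr \<alpha>))"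
        if n: "n < N" for n
      proof -
        define y where "y = T*2^n"
        have y0: "y > 0" and yx: "y < x" and yT: "y > \<theta>0" using T Nlt[OF n] unfolding y_def
          by (auto intro: less_le_trans[of _ T] simp: y_def)
        have "exp (l*(2*y)) * (1 - l*y) \<le> exp (l*(2*y)) * exp (- (l*y))"
          by (intro mult_left_mono) (use exp_ge_add_one_self[of "-(l*y)"] in auto)
        also have "\<dots> = exp (l*y)" by (simp add: exp_add[symmetric])
        finally have dle: "d n \<le> l*y * exp (l*(2*y))"
          unfolding d_def y_def by (simp add: algebra_simps)
        have pr: "prob {\<omega>\<in>space M. T*2^n < W i \<omega>} \<le> exp (-c * y powr \<alpha>)"
          using tail[OF i yT] by (simp add: y_def)
        have "x powr (\<alpha>-1) \<le> y powr (\<alpha>-1)" using a1 y0 yx by (intro powr_mono2') auto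
        hence "l*(2*y) \<le> c/2 * (y powr (\<alpha>-1) * y)"
          using c0 y0 unfolding l_def by (auto intro!: mult_left_mono mult_right_mono simp: field_simps)
        also have "y powr (\<alpha>-1) * y = y powr \<alpha>" using y0 by (simp add: powr_diff)
        finally have ly: "l*(2*y) \<le> c/2 * y powr \<alpha>" .
        have ee: "exp (l*(2*y)) * exp (-c * y powr \<alpha>) = exp (l*(2*y) - c * y powr \<alpha>)"
          by (simp add: exp_add[symmetric])
        have "d n * prob {\<omega>\<in>space M. T*2^n < W i \<omega>} \<le> (l*y * exp (l*(2*y))) * exp (-c * y powr \<alpha>)"
          using dle pr d0 l0 y0 by (intro mult_mono) auto
        also have "\<dots> = l*y * exp (l*(2*y) - c * y powr \<alpha>)"
          using ee by simp
        also have "\<dots> \<le> l*y * exp (- (c/2) * y powr \<alpha>)"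
          using ly l0 y0 by (intro mult_left_mono) auto
        finally show ?thesis by (simp add: y_def)
      qed
      thus ?thesis by (intro add_left_mono sum_mono) auto
    qed
    also have "\<dots> \<le> exp (l*T) + l * K"
      using hK[of N] l0 by (simp add: sum_distrib_left[symmetric] mult_left_mono)
    also have "\<dots> \<le> exp (l*T) * exp (l*K)"
    proof -
      have "1 \<le> exp (l*T)" using l0 T by simp
      hence "l*K \<le> exp (l*T) * (l*K)" using l0 K0 mult_right_mono[of 1 "exp (l*T)" "l*K"] by simp
      moreover have "1 + l*K \<le> exp (l*K)" by (rule exp_ge_add_one_self)
      ultimately have "exp (l*T) + l*K \<le> exp (l*T) * (1 + l*K)" by (simp add: algebra_simps)
      also have "\<dots> \<le> exp (l*T) * exp (l*K)" using \<open>1 + l*K \<le> exp (l*K)\<close> by simp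
      finally show ?thesis .
    qed
    also have "\<dots> = exp (l*(T+K))" by (simp add: exp_add[symmetric] algebra_simps)
    finally show ?thesis .
  qed
  define P where "P \<omega> = (\<Prod>i\<in>{1..k}. exp (l * min (W i \<omega>) x))" for \<omega>
  have indep': "indep_vars (\<lambda>_. borel) (\<lambda>i \<omega>. exp (l * min (W i \<omega>) x)) {1..k}"
    by (rule indep_vars_compose2[OF indep]) measurable
  have intE: "integrable M (\<lambda>\<omega>. exp (l * min (W i \<omega>) x))" if i: "i \<in> {1..k}" for i
  proof -
    have [measurable]: "W i \<in> borel_measurable M" using meas i .
    show ?thesis
      by (rule integrable_const_bound[where B="exp (l*x)"]) (use l0 in \<open>auto intro!: mult_left_mono\<close>)
  qed
  have intP: "integrable M P" unfolding P_def
    by (rule indep_vars_integrable[OF _ indep']) (auto intro: intE)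
  have eqP: "(\<integral>\<omega>. P \<omega> \<partial>M) = (\<Prod>i\<in>{1..k}. \<integral>\<omega>. exp (l * min (W i \<omega>) x) \<partial>M)" unfolding P_def
    by (rule indep_vars_lebesgue_integral[OF _ indep']) (auto intro: intE)
  also have "\<dots> \<le> (\<Prod>i\<in>{1..k}. exp (l*(T+K)))"
    by (intro prod_mono) (auto intro!: int_bound integral_nonneg_AE)
  also have "\<dots> = exp (real k * (l*(T+K)))" by (simp add: exp_of_nat_mult)
  finally have EP: "(\<integral>\<omega>. P \<omega> \<partial>M) \<le> exp (real k * (l*(T+K)))" .
  have mP[measurable]: "P \<in> borel_measurable M" unfolding P_def
    by (intro borel_measurable_prod) (use meas in measurable)
  have E2: "prob {\<omega>\<in>space M. P \<omega> \<ge> exp (l*x)} \<le> (\<integral>\<omega>. P \<omega> \<partial>M) / exp (l*x)"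
    by (rule integral_Markov_inequality_measure[OF intP, of "space M"]) (auto simp: P_def intro!: AE_I2 prod_nonneg)
  also have "\<dots> \<le> exp (real k * (l*(T+K))) / exp (l*x)"
    using EP by (simp add: divide_right_mono)
  also have "\<dots> = exp (real k * (l*(T+K)) - l*x)" by (simp add: exp_diff)
  also have "\<dots> \<le> exp (-(c/8) * x powr \<alpha>)"
  proof -
    have "l * (real k * (T+K)) \<le> l * (x/2)" using xk l0 by (intro mult_left_mono) (auto simp: algebra_simps)
    hence "real k * (l*(T+K)) - l*x \<le> -(l*x)/2" by (simp add: algebra_simps)
    also have "\<dots> = -(c/8) * x powr \<alpha>" using lx by simp
    finally show ?thesis by simp
  qed
  finally have E2b: "prob {\<omega>\<in>space M. P \<omega> \<ge> exp (l*x)} \<le> exp (-(c/8) * x powr \<alpha>)" .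
  define E1 where "E1 = (\<Union>i\<in>{1..k}. {\<omega>\<in>space M. x < W i \<omega>})"
  have E1s: "E1 \<in> sets M" unfolding E1_def
  proof (rule sets.finite_UN)
    fix i assume "i \<in> {1..k}"
    hence [measurable]: "W i \<in> borel_measurable M" by (rule meas)
    show "{\<omega>\<in>space M. x < W i \<omega>} \<in> sets M" by measurable
  qed auto
  have E1b: "prob E1 \<le> real k * exp (-c * x powr \<alpha>)"
  proof -
    have "prob E1 \<le> (\<Sum>i\<in>{1..k}. prob {\<omega>\<in>space M. x < W i \<omega>})" unfolding E1_def
    proof (rule measure_UNION_le)
      fix i assume "i \<in> {1..k}"
      hence [measurable]: "W i \<in> borel_measurable M" by (rule meas)
      show "{\<omega>\<in>space M. x < W i \<omega>} \<in> sets M" by measurable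
    qed auto
    also have "\<dots> \<le> (\<Sum>i\<in>{1..k}. exp (-c * x powr \<alpha>))"
      using tail xT T by (intro sum_mono) auto
    finally show ?thesis by simp
  qed
  have sub: "{\<omega>\<in>space M. (\<Sum>i\<in>{1..k}. W i \<omega>) > x} \<subseteq> E1 \<union> {\<omega>\<in>space M. P \<omega> \<ge> exp (l*x)}"
  proof
    fix \<omega> assume w: "\<omega> \<in> {\<omega>\<in>space M. (\<Sum>i\<in>{1..k}. W i \<omega>) > x}"
    show "\<omega> \<in> E1 \<union> {\<omega>\<in>space M. P \<omega> \<ge> exp (l*x)}"
    proof (cases "\<omega> \<in> E1")
      case False
      hence le: "\<And>i. i \<in> {1..k} \<Longrightarrow> W i \<omega> \<le> x" using w unfolding E1_def by (force simp: not_less)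
      have "P \<omega> = (\<Prod>i\<in>{1..k}. exp (l * W i \<omega>))" unfolding P_def
        using le by (intro prod.cong) (auto simp: min_def)
      also have "\<dots> = exp (l * (\<Sum>i\<in>{1..k}. W i \<omega>))" by (simp add: exp_sum sum_distrib_left)
      finally have "P \<omega> = exp (l * (\<Sum>i\<in>{1..k}. W i \<omega>))" .
      moreover have "l * x \<le> l * (\<Sum>i\<in>{1..k}. W i \<omega>)" using w l0 by (intro mult_left_mono) auto
      ultimately show ?thesis using w by auto
    qed auto
  qed
  have "prob {\<omega>\<in>space M. (\<Sum>i\<in>{1..k}. W i \<omega>) > x} \<le> prob (E1 \<union> {\<omega>\<in>space M. P \<omega> \<ge> exp (l*x)})"
    by (rule finite_measure_mono[OF sub]) (use E1s in measurable)
  also have "\<dots> \<le> prob E1 + prob {\<omega>\<in>space M. P \<omega> \<ge> exp (l*x)}"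
    by (rule measure_Un_le) (use E1s in measurable)
  finally show ?thesis using E1b E2b by linarith
qed
theorem proposition2p3:
  fixes c \<alpha> \<theta>0 r0 :: real
  assumes "0 < \<alpha>" and "\<alpha> \<le> 1" and "0 < c"
  shows "\<exists>\<theta>t0 c'. c' > 0 \<and>
    (\<forall>(M :: 'a measure) (Y :: nat \<Rightarrow> nat \<Rightarrow> nat \<Rightarrow> 'a \<Rightarrow> real) (Yr :: nat \<Rightarrow> 'a \<Rightarrow> real).
      prob_space M \<longrightarrow>
      (\<forall>r k i. 1 \<le> k \<and> k \<le> r \<and> i \<in> {1..k} \<longrightarrow> Y r k i \<in> borel_measurable M) \<longrightarrow>
      (\<forall>r k. 1 \<le> k \<and> k \<le> r \<longrightarrow>
         prob_space.indep_vars M (\<lambda>_. borel) (\<lambda>i. Y r k i) {1..k}) \<longrightarrow>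
      (\<forall>r k i \<theta>. 1 \<le> k \<and> k \<le> r \<and> i \<in> {1..k} \<and> real r / real k > r0 \<and> \<theta> > \<theta>0 \<longrightarrow>
         measure M {x \<in> space M. Y r k i x > \<theta> * (real r / real k) powr (1/3)}
           \<le> exp (- c * \<theta> powr \<alpha>)) \<longrightarrow>
      (\<forall>r. Yr r \<in> borel_measurable M) \<longrightarrow>
      (\<forall>r k. 1 \<le> r \<and> 1 \<le> k \<and> k \<le> r \<and> real r / real k > r0 \<longrightarrow>
         (\<forall>x \<in> space M. Yr r x \<le> (\<Sum>i\<in>{1..k}. Y r k i x))) \<longrightarrow>
      (\<forall>r \<theta>. 1 \<le> r \<and> real r > r0 \<and> \<theta>t0 < \<theta> \<and> \<theta> < real r powr (2/3) \<longrightarrow>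
         measure M {x \<in> space M. Yr r x > \<theta> * real r powr (1/3)}
           \<le> exp (- c' * \<theta> powr (3 * \<alpha> / 2))))"
proof -
  define T where "T = max \<theta>0 0 + 1"
  have T: "\<theta>0 < T" "0 < T" "1 \<le> T" unfolding T_def by auto
  obtain K where K0: "K \<ge> 0" and hK: "\<And>N. (\<Sum>n<N. T*2^n*exp(-(c/2)*(T*2^n) powr \<alpha>)) \<le> K"
    using K_exists[of "c/2" \<alpha> T] assms T by auto
  define A where "A = 2*(T+K)"
  have A1: "A \<ge> 1" using T K0 by (simp add: A_def)
  obtain x1 where hx1: "\<And>x. x \<ge> x1 \<Longrightarrow> x*exp(-(c/2)*x powr \<alpha>) \<le> 1 \<and> 2*exp(-(c/16)*x powr \<alpha>) \<le> 1"
    using finish_ev[of c \<alpha>] assms by auto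
  define x0 where "x0 = max x1 T"
  define C where "C = max (r0+1) (A^2)"
  have C: "C \<ge> 1" "C > r0" "A^3 \<le> C^2"
  proof -
    have "A^2 \<ge> 1" using A1 by simp
    thus "C \<ge> 1" by (simp add: C_def)
    show "C > r0" by (simp add: C_def)
    have "A^3 \<le> A^4" using A1 by (intro power_increasing) auto
    also have "A^4 = (A^2)^2" by simp
    also have "\<dots> \<le> C^2" using A1 by (intro power_mono) (auto simp: C_def)
    finally show "A^3 \<le> C^2" .
  qed
  define \<theta>t where "\<theta>t = max x0 (C powr (2/3))"
  define c' where "c' = c/16 * (2*C) powr (-\<alpha>/3)"
  show ?thesis
  proof (rule exI[of _ \<theta>t], rule exI[of _ c'], intro conjI allI impI)
    show "c' > 0" using assms C by (simp add: c'_def)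
    fix M :: "'a measure" and Y :: "nat \<Rightarrow> nat \<Rightarrow> nat \<Rightarrow> 'a \<Rightarrow> real" and Yr :: "nat \<Rightarrow> 'a \<Rightarrow> real"
      and r :: nat and \<theta> :: real
    assume ps: "prob_space M"
      and meas: "\<forall>r k i. 1 \<le> k \<and> k \<le> r \<and> i \<in> {1..k} \<longrightarrow> Y r k i \<in> borel_measurable M"
      and ind: "\<forall>r k. 1 \<le> k \<and> k \<le> r \<longrightarrow> prob_space.indep_vars M (\<lambda>_. borel) (\<lambda>i. Y r k i) {1..k}"
      and tail: "\<forall>r k i \<theta>. 1 \<le> k \<and> k \<le> r \<and> i \<in> {1..k} \<and> real r / real k > r0 \<and> \<theta> > \<theta>0 \<longrightarrow>
         measure M {x \<in> space M. Y r k i x > \<theta> * (real r / real k) powr (1/3)} \<le> exp (- c * \<theta> powr \<alpha>)"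
      and measYr: "\<forall>r. Yr r \<in> borel_measurable M"
      and dom: "\<forall>r k. 1 \<le> r \<and> 1 \<le> k \<and> k \<le> r \<and> real r / real k > r0 \<longrightarrow>
         (\<forall>x \<in> space M. Yr r x \<le> (\<Sum>i\<in>{1..k}. Y r k i x))"
      and r\<theta>: "1 \<le> r \<and> real r > r0 \<and> \<theta>t < \<theta> \<and> \<theta> < real r powr (2/3)"
    interpret prob_space M by (rule ps)
    have r1: "1 \<le> r" and \<theta>t: "\<theta>t < \<theta>" and \<theta>r: "\<theta> < real r powr (2/3)" using r\<theta> by auto
    have \<theta>x0: "x0 < \<theta>" and \<theta>C: "C powr (2/3) < \<theta>" using \<theta>t by (auto simp: \<theta>t_def)
    have \<theta>0: "\<theta> > 0" using \<theta>x0 T by (simp add: x0_def)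
    define p where "p = \<theta> powr (3/2)"
    have rpos: "real r > 0" using r1 by simp
    have p_r: "p < real r"
    proof -
      have "p < (real r powr (2/3)) powr (3/2)" unfolding p_def
        using \<theta>r \<theta>0 by (intro powr_less_mono2) auto
      also have "\<dots> = real r" using rpos by (simp add: powr_powr)
      finally show ?thesis .
    qed
    have p_C: "C < p"
    proof -
      have "(C powr (2/3)) powr (3/2) < p" unfolding p_def
        using \<theta>C by (intro powr_less_mono2) auto
      also have "(C powr (2/3)) powr (3/2) = C" using C by (simp add: powr_powr)
      finally show ?thesis .
    qed
    define k where "k = nat \<lfloor>p/C\<rfloor>"
    have pC1: "p/C > 1" using p_C C by simp
    have fl1: "\<lfloor>p/C\<rfloor> \<ge> 1" using pC1 by (simp add: le_floor_iff)
    have rk_eq: "real k = of_int \<lfloor>p/C\<rfloor>" using fl1 by (simp add: k_def)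
    have "real k \<ge> 1" using rk_eq fl1 by simp
    hence k1: "k \<ge> 1" by simp
    have k_le: "real k \<le> p/C" using rk_eq by simp
    have k_half: "real k \<ge> p/(2*C)"
    proof -
      have a: "p/C < real k + 1" using rk_eq real_of_int_floor_add_one_gt[of "p/C"] by simp
      have b: "real k \<ge> 1" using k1 by simp
      have "p/(2*C) = (p/C)/2" by simp
      thus ?thesis using a b by linarith
    qed
    have kpos: "real k > 0" using k1 by simp
    have kC: "real k * C \<le> p" using k_le C by (simp add: field_simps)
    have kr: "k \<le> r"
    proof -
      have "real k \<le> real k * C" using C kpos by simp
      thus ?thesis using kC p_r by linarith
    qed
    have rk: "real r / real k > r0"
    proof -
      have "C < real r / real k" using kC p_r kpos by (simp add: field_simps)
      thus ?thesis using C by linarith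
    qed
    define u where "u = (real r / real k) powr (1/3)"
    have u0: "u > 0" using rpos kpos by (simp add: u_def)
    define W where "W i \<omega> = Y r k i \<omega> / u" for i \<omega>
    have measY: "Y r k i \<in> borel_measurable M" if "i \<in> {1..k}" for i
      using meas k1 kr that by auto
    have measW: "W i \<in> borel_measurable M" if i: "i \<in> {1..k}" for i
    proof -
      have [measurable]: "Y r k i \<in> borel_measurable M" using measY i .
      show ?thesis unfolding W_def by measurable
    qed
    have indW: "indep_vars (\<lambda>_. borel) W {1..k}"
    proof -
      have "indep_vars (\<lambda>_. borel) (\<lambda>i. Y r k i) {1..k}" using ind k1 kr by auto
      hence "indep_vars (\<lambda>_. borel) (\<lambda>i \<omega>. (\<lambda>y. y / u) (Y r k i \<omega>)) {1..k}"
        by (rule indep_vars_compose2) measurable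
      thus ?thesis by (simp add: W_def[abs_def])
    qed
    have tailW: "prob {\<omega>\<in>space M. W i \<omega> > t} \<le> exp (-c * t powr \<alpha>)" if i: "i \<in> {1..k}" and t: "t > \<theta>0" for i t
    proof -
      have "{\<omega>\<in>space M. W i \<omega> > t} = {\<omega>\<in>space M. Y r k i \<omega> > t * (real r / real k) powr (1/3)}"
        using u0 by (auto simp: W_def pos_less_divide_eq u_def[symmetric])
      also have "prob \<dots> \<le> exp (-c * t powr \<alpha>)" using tail k1 kr i rk t by auto
      finally show ?thesis .
    qed
    define x where "x = \<theta> * real k powr (1/3)"
    have k13: "real k powr (1/3) \<ge> 1" using k1 by (intro ge_one_powr_ge_zero) auto
    have x\<theta>: "x \<ge> \<theta>" unfolding x_def using k13 \<theta>0 by (simp add: mult_le_cancel_left1)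
    have xpos: "x > 0" using x\<theta> \<theta>0 by simp
    have xT: "T \<le> x" and xx1: "x1 \<le> x" using x\<theta> \<theta>x0 by (auto simp: x0_def)
    have xu: "x * u = \<theta> * real r powr (1/3)"
      using kpos rpos by (simp add: x_def u_def powr_divide)
    have xA: "A * real k \<le> x"
    proof (rule power_le_imp_le_base[where n=2])
      have x3: "x^3 = \<theta>^3 * real k"
      proof -
        have "(real k powr (1/3))^3 = real k" using kpos by (simp add: powr_power)
        thus ?thesis by (simp add: x_def power_mult_distrib)
      qed
      have p2: "p^2 = \<theta>^3"
      proof -
        have "p^2 = \<theta> powr (2 * (3/2))" unfolding p_def using \<theta>0 by (simp add: powr_power)
        also have "\<dots> = \<theta>^3" using \<theta>0 by (simp add: powr_numeral)
        finally show ?thesis .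
      qed
      have "(A * real k)^3 = A^3 * (real k)^2 * real k" by (simp add: power_mult_distrib power3_eq_cube power2_eq_square)
      also have "\<dots> \<le> C^2 * (real k)^2 * real k" using C kpos by (intro mult_right_mono) auto
      also have "\<dots> = (real k * C)^2 * real k" by (simp add: power_mult_distrib)
      also have "\<dots> \<le> p^2 * real k" using kC kpos C by (intro mult_right_mono power_mono) auto
      also have "\<dots> = x^3" using x3 p2 by simp
      finally show "(A * real k) ^ Suc 2 \<le> x ^ Suc 2" by (simp add: numeral_3_eq_3)
      show "0 \<le> x" using xpos by simp
    qed
    have xk2: "2*(T+K)*real k \<le> x" using xA by (simp add: A_def)
    have core_b: "prob {\<omega>\<in>space M. (\<Sum>i\<in>{1..k}. W i \<omega>) > x} \<le> real k * exp (-c * x powr \<alpha>) + exp (-(c/8) * x powr \<alpha>)"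
      by (rule core[OF measW indW tailW _ _ _ T(1) T(2) K0 hK xT xk2]) (use assms in auto)
    have "1 * real k \<le> A * real k" using A1 kpos by (intro mult_right_mono) auto
    hence kx: "real k \<le> x" using xA by linarith
    have fin: "real k * exp (-c * x powr \<alpha>) + exp (-(c/8) * x powr \<alpha>) \<le> exp (-(c/16) * x powr \<alpha>)"
      using finish[OF assms(3) xpos kx] hx1[OF xx1] by auto
    have sub: "{\<omega>\<in>space M. Yr r \<omega> > \<theta> * real r powr (1/3)} \<subseteq> {\<omega>\<in>space M. (\<Sum>i\<in>{1..k}. W i \<omega>) > x}"
    proof
      fix \<omega> assume w: "\<omega> \<in> {\<omega>\<in>space M. Yr r \<omega> > \<theta> * real r powr (1/3)}"
      have "Yr r \<omega> \<le> (\<Sum>i\<in>{1..k}. Y r k i \<omega>)" using dom r1 k1 kr rk w by auto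
      hence "x * u < (\<Sum>i\<in>{1..k}. Y r k i \<omega>)" using w xu by auto
      hence "x < (\<Sum>i\<in>{1..k}. Y r k i \<omega>) / u" using u0 by (simp add: pos_less_divide_eq)
      also have "(\<Sum>i\<in>{1..k}. Y r k i \<omega>) / u = (\<Sum>i\<in>{1..k}. W i \<omega>)" by (simp add: W_def sum_divide_distrib)
      finally show "\<omega> \<in> {\<omega>\<in>space M. (\<Sum>i\<in>{1..k}. W i \<omega>) > x}" using w by auto
    qed
    have msum[measurable]: "(\<lambda>\<omega>. \<Sum>i\<in>{1..k}. W i \<omega>) \<in> borel_measurable M"
      by (rule borel_measurable_sum) (rule measW)
    have "measure M {\<omega>\<in>space M. Yr r \<omega> > \<theta> * real r powr (1/3)} \<le> prob {\<omega>\<in>space M. (\<Sum>i\<in>{1..k}. W i \<omega>) > x}"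
      by (rule finite_measure_mono[OF sub]) measurable
    also have "\<dots> \<le> exp (-(c/16) * x powr \<alpha>)" using core_b fin by linarith
    also have "\<dots> \<le> exp (- c' * \<theta> powr (3 * \<alpha> / 2))"
    proof -
      have "(p/(2*C)) powr (\<alpha>/3) \<le> real k powr (\<alpha>/3)"
        using k_half assms C p_C by (intro powr_mono2) auto
      moreover have "(p/(2*C)) powr (\<alpha>/3) = \<theta> powr (\<alpha>/2) * (2*C) powr (-\<alpha>/3)"
      proof -
        have pe0: "p powr (\<alpha>/3) = \<theta> powr (3/2 * (\<alpha>/3))" unfolding p_def by (rule powr_powr)
        have "3/2 * (\<alpha>/3) = \<alpha>/2" by simp
        hence pe: "p powr (\<alpha>/3) = \<theta> powr (\<alpha>/2)" using pe0 by simp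
        have "(p/(2*C)) powr (\<alpha>/3) = p powr (\<alpha>/3) / (2*C) powr (\<alpha>/3)" by (rule powr_divide)
        also have "\<dots> = \<theta> powr (\<alpha>/2) / (2*C) powr (\<alpha>/3)" by (simp only: pe)
        also have "\<dots> = \<theta> powr (\<alpha>/2) * (2*C) powr (-\<alpha>/3)"
          by (simp add: powr_minus_divide)
        finally show ?thesis .
      qed
      ultimately have h1: "\<theta> powr (\<alpha>/2) * (2*C) powr (-\<alpha>/3) \<le> real k powr (\<alpha>/3)" by simp
      have "x powr \<alpha> = \<theta> powr \<alpha> * (real k powr (1/3)) powr \<alpha>"
        unfolding x_def by (rule powr_mult)
      also have "(real k powr (1/3)) powr \<alpha> = real k powr (1/3 * \<alpha>)" by (rule powr_powr)
      also have "1/3 * \<alpha> = \<alpha>/3" by simp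
      finally have "x powr \<alpha> = \<theta> powr \<alpha> * real k powr (\<alpha>/3)" .
      also have "\<dots> \<ge> \<theta> powr \<alpha> * (\<theta> powr (\<alpha>/2) * (2*C) powr (-\<alpha>/3))"
        using h1 by (intro mult_left_mono) auto
      finally have "\<theta> powr \<alpha> * (\<theta> powr (\<alpha>/2) * (2*C) powr (-\<alpha>/3)) \<le> x powr \<alpha>" .
      moreover have "\<theta> powr (3*\<alpha>/2) * (2*C) powr (-\<alpha>/3) = \<theta> powr \<alpha> * (\<theta> powr (\<alpha>/2) * (2*C) powr (-\<alpha>/3))"
      proof -
        have "3*\<alpha>/2 = \<alpha> + \<alpha>/2" by simp
        hence eq: "\<theta> powr (3*\<alpha>/2) = \<theta> powr \<alpha> * \<theta> powr (\<alpha>/2)" by (simp only: powr_add)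
        show ?thesis by (simp only: eq mult.assoc)
      qed
      ultimately have "\<theta> powr (3*\<alpha>/2) * (2*C) powr (-\<alpha>/3) \<le> x powr \<alpha>" by linarith
      hence "c/16 * (\<theta> powr (3*\<alpha>/2) * (2*C) powr (-\<alpha>/3)) \<le> c/16 * x powr \<alpha>"
        using assms by (intro mult_left_mono) auto
      hence "c' * \<theta> powr (3 * \<alpha> / 2) \<le> (c/16) * x powr \<alpha>" by (simp add: c'_def mult_ac)
      thus ?thesis by simp
    qed
    finally show "measure M {x \<in> space M. Yr r x > \<theta> * real r powr (1/3)} \<le> exp (- c' * \<theta> powr (3 * \<alpha> / 2))" .
  qed
qed

end
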